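(* Let $\Bbbk$ be a field, $n$ a positive integer, and $\mathbb{F}=\Bbbk[\xi]\simeq\Bbbk[x]/(f(x))$ a quadratic field extension where $\xi$ is a root of the irreducible polynomial $f$, which is either $f(x)=x^2+\tau$ or $f(x)=x^2+x+\tau$ with $\tau\in\Bbbk$. Let $Z=A+\xi B$ and $W=C+\xi D$ be in $M_n(\mathbb{F})$ with $A,B,C,D\in M_n(\Bbbk)$. If $f(x)=x^2+\tau$, then $ZW=N_1+\xi N_2$ where $M_1=(A-B)(C+\tau D)$, $M_2=AD$, $M_3=BC$, $N_1=M_1-\tau M_2+M_3$, $N_2=M_2+M_3$. If $f(x)=x^2+x+\tau$, then $ZW=N_1+\xi N_2$ where $M_1=AC$, $M_2=BD$, $M_3=(A-B)(C-D)$, $N_1=M_1-\tau M_2$, $N_2=M_1-M_3$. Moreover, these two algorithms are optimal in the sense of the minimum number of multiplications in $M_n(\Bbbk)$: among all algorithms computing the product map $M_n(\mathbb{F})\times M_n(\mathbb{F})\to M_n(\mathbb{F})$ using multiplications and additions of the indeterminate matrices together with scalar multiplications, none uses fewer than three multiplications in $M_n(\Bbbk)$.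
   Context: $M_n(\mathbb{L})$ denotes the algebra of $n\times n$ matrices over a field $\mathbb{L}$. Since $M_n(\mathbb{F})=M_n(\Bbbk)\otimes_\Bbbk\mathbb{F}$, every $Z\in M_n(\mathbb{F})$ is uniquely written $A+\xi B$ with $A,B\in M_n(\Bbbk)$. A multiplication in $M_n(\Bbbk)$ is a product of a linear combination of $A,B$ with a linear combination of $C,D$. *)

theory Defs
  imports "Jordan_Normal_Form.Matrix" "HOL-Computational_Algebra.Polynomial"
begin

definition is_field_emb :: "('k::field \<Rightarrow> 'F::field) \<Rightarrow> bool" where
  "is_field_emb h \<longleftrightarrow> h 1 = 1 \<and> (\<forall>x y. h (x + y) = h x + h y) \<and> (\<forall>x y. h (x * y) = h x * h y)"

definition lift_mat :: "('k::field \<Rightarrow> 'F::field) \<Rightarrow> 'F \<Rightarrow> 'k mat \<Rightarrow> 'k mat \<Rightarrow> 'F mat" where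
  "lift_mat h \<xi> A B = map_mat h A + \<xi> \<cdot>\<^sub>m map_mat h B"

definition mat_lincomb :: "nat \<Rightarrow> nat \<Rightarrow> (nat \<Rightarrow> 'a::comm_ring) \<Rightarrow> (nat \<Rightarrow> 'a mat) \<Rightarrow> 'a mat" where
  "mat_lincomb n r \<alpha> M = mat n n (\<lambda>(i,j). \<Sum>l<r. \<alpha> l * M l $$ (i,j))"

text \<open>A (bilinear) algorithm with r multiplications in M_n(k):
  M_l = (a_l A + b_l B)(c_l C + d_l D) for l < r, and ZW = N_1 + xi N_2 with
  N_1 = sum alpha_l M_l, N_2 = sum beta_l M_l; it computes the product
  if this holds for all A, B, C, D in M_n(k).\<close>
definition alg_computes_product ::
  "('k::field \<Rightarrow> 'F::field) \<Rightarrow> 'F \<Rightarrow> nat \<Rightarrow> nat \<Rightarrow> (nat \<Rightarrow> 'k) \<Rightarrow> (nat \<Rightarrow> 'k) \<Rightarrow> (nat \<Rightarrow> 'k)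
     \<Rightarrow> (nat \<Rightarrow> 'k) \<Rightarrow> (nat \<Rightarrow> 'k) \<Rightarrow> (nat \<Rightarrow> 'k) \<Rightarrow> bool" where
  "alg_computes_product h \<xi> n r a b c d \<alpha> \<beta> \<longleftrightarrow>
     (\<forall>A\<in>carrier_mat n n. \<forall>B\<in>carrier_mat n n. \<forall>C\<in>carrier_mat n n. \<forall>D\<in>carrier_mat n n.
        (let M = (\<lambda>l. (a l \<cdot>\<^sub>m A + b l \<cdot>\<^sub>m B) * (c l \<cdot>\<^sub>m C + d l \<cdot>\<^sub>m D))
         in lift_mat h \<xi> A B * lift_mat h \<xi> C D
              = lift_mat h \<xi> (mat_lincomb n r \<alpha> M) (mat_lincomb n r \<beta> M)))"

end

theory Submission
  imports Defs
begin


lemma smI_mult: "((p::'a::comm_ring_1) \<cdot>\<^sub>m 1\<^sub>m n) * (q \<cdot>\<^sub>m 1\<^sub>m n) = (p*q) \<cdot>\<^sub>m 1\<^sub>m n"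
proof -
  have "(p \<cdot>\<^sub>m 1\<^sub>m n) * (q \<cdot>\<^sub>m 1\<^sub>m n) = p \<cdot>\<^sub>m (1\<^sub>m n * (q \<cdot>\<^sub>m 1\<^sub>m n))"
    by (rule mult_smult_assoc_mat) auto
  also have "\<dots> = p \<cdot>\<^sub>m (q \<cdot>\<^sub>m 1\<^sub>m n)" by (subst left_mult_one_mat) auto
  also have "\<dots> = (p*q) \<cdot>\<^sub>m 1\<^sub>m n" by (rule eq_matI) auto
  finally show ?thesis .
qed

lemma smI_add: "(a::'a::comm_ring_1) \<cdot>\<^sub>m (x \<cdot>\<^sub>m 1\<^sub>m n) + b \<cdot>\<^sub>m (y \<cdot>\<^sub>m 1\<^sub>m n) = (a*x+b*y) \<cdot>\<^sub>m 1\<^sub>m n"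
  by (rule eq_matI) (auto simp: algebra_simps)

lemma lincomb_I: fixes \<alpha> :: "nat \<Rightarrow> 'a::comm_ring_1" shows "i < n \<Longrightarrow> mat_lincomb n r \<alpha> (\<lambda>l. p l \<cdot>\<^sub>m 1\<^sub>m n) $$ (i,i) = (\<Sum>l<r. \<alpha> l * p l)"
  by (simp add: mat_lincomb_def)


lemma dim_lincomb[simp]: "dim_row (mat_lincomb n r \<alpha> M) = n" "dim_col (mat_lincomb n r \<alpha> M) = n"
  by (simp_all add: mat_lincomb_def)

lemma emb_field_hom: assumes "is_field_emb h" shows "field_hom h"
proof -
  have a: "h (x + y) = h x + h y" "h (x*y) = h x * h y" "h 1 = 1" for x y using assms unfolding is_field_emb_def by auto
  have "h 0 + h 0 = h 0 + 0" using a(1)[of 0 0] by simp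
  hence z: "h 0 = 0" by (simp only: add_left_cancel)
  show ?thesis by unfold_locales (auto simp: a z)
qed

lemma emb_nz: assumes "is_field_emb h" "x \<noteq> 0" shows "h x \<noteq> 0"
proof
  assume "h x = 0"
  interpret field_hom h by (rule emb_field_hom[OF assms(1)])
  have "h (x * inverse x) = 1" using assms(2) by simp
  then show False using \<open>h x = 0\<close> by (simp add: hom_mult)
qed

lemma sum_le2: assumes "r \<le> (2::nat)" "f 0 = (0::'a::comm_monoid_add)"
  shows "sum f {..<r} = (if 1 < r then f 1 else 0)"
proof -
  have "r = 0 \<or> r = 1 \<or> r = 2" using assms(1) by auto
  then show ?thesis using assms(2) by (auto simp: numeral_2_eq_2 lessThan_Suc)
qed

lemma lower_bound:
  fixes h :: "'k::field \<Rightarrow> 'F::field"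
  assumes emb: "is_field_emb h" and xi: "\<xi> \<notin> range h" and n: "0 < n"
    and alg: "alg_computes_product h \<xi> n r a b c d \<alpha> \<beta>"
  shows "3 \<le> r"
proof (rule ccontr)
  assume "\<not> 3 \<le> r"
  hence r: "r \<le> 2" by simp
  interpret field_hom h by (rule emb_field_hom[OF emb])
  have liftI: "lift_mat h \<xi> (x \<cdot>\<^sub>m 1\<^sub>m n) (y \<cdot>\<^sub>m 1\<^sub>m n) = (h x + \<xi> * h y) \<cdot>\<^sub>m 1\<^sub>m n" for x y
    unfolding lift_mat_def by (rule eq_matI) auto
  have scal: "(h x + \<xi> * h y) * (h u + \<xi> * h v) =
     h (\<Sum>l<r. \<alpha> l * ((a l * x + b l * y) * (c l * u + d l * v))) + \<xi> * h (\<Sum>l<r. \<beta> l * ((a l * x + b l * y) * (c l * u + d l * v)))" for x y u v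
  proof -
    let ?I = "1\<^sub>m n :: 'k mat"
    have "lift_mat h \<xi> (x \<cdot>\<^sub>m ?I) (y \<cdot>\<^sub>m ?I) * lift_mat h \<xi> (u \<cdot>\<^sub>m ?I) (v \<cdot>\<^sub>m ?I)
      = lift_mat h \<xi> (mat_lincomb n r \<alpha> (\<lambda>l. (a l \<cdot>\<^sub>m (x \<cdot>\<^sub>m ?I) + b l \<cdot>\<^sub>m (y \<cdot>\<^sub>m ?I)) * (c l \<cdot>\<^sub>m (u \<cdot>\<^sub>m ?I) + d l \<cdot>\<^sub>m (v \<cdot>\<^sub>m ?I))))
         (mat_lincomb n r \<beta> (\<lambda>l. (a l \<cdot>\<^sub>m (x \<cdot>\<^sub>m ?I) + b l \<cdot>\<^sub>m (y \<cdot>\<^sub>m ?I)) * (c l \<cdot>\<^sub>m (u \<cdot>\<^sub>m ?I) + d l \<cdot>\<^sub>m (v \<cdot>\<^sub>m ?I))))"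
      using alg unfolding alg_computes_product_def Let_def by auto
    hence "((h x + \<xi> * h y) * (h u + \<xi> * h v)) \<cdot>\<^sub>m 1\<^sub>m n
      = lift_mat h \<xi> (mat_lincomb n r \<alpha> (\<lambda>l. ((a l * x + b l * y) * (c l * u + d l * v)) \<cdot>\<^sub>m ?I))
         (mat_lincomb n r \<beta> (\<lambda>l. ((a l * x + b l * y) * (c l * u + d l * v)) \<cdot>\<^sub>m ?I))"
      by (simp only: liftI smI_add smI_mult)
    hence "(((h x + \<xi> * h y) * (h u + \<xi> * h v)) \<cdot>\<^sub>m 1\<^sub>m n) $$ (0,0)
      = lift_mat h \<xi> (mat_lincomb n r \<alpha> (\<lambda>l. ((a l * x + b l * y) * (c l * u + d l * v)) \<cdot>\<^sub>m ?I))
         (mat_lincomb n r \<beta> (\<lambda>l. ((a l * x + b l * y) * (c l * u + d l * v)) \<cdot>\<^sub>m ?I)) $$ (0,0)"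
      by simp
    thus ?thesis using n by (simp add: lift_mat_def lincomb_I)
  qed
  define x :: 'k where "x = (if a 0 = 0 \<and> b 0 = 0 then 1 else - b 0)"
  define y :: 'k where "y = (if a 0 = 0 \<and> b 0 = 0 then 0 else a 0)"
  have xy: "x \<noteq> 0 \<or> y \<noteq> 0" unfolding x_def y_def by auto
  have xy0: "a 0 * x + b 0 * y = 0" unfolding x_def y_def by (auto simp: algebra_simps)
  define z where "z = h x + \<xi> * h y"
  have z0: "z \<noteq> 0"
  proof
    assume "z = 0"
    show False
    proof (cases "y = 0")
      case True
      then show False using xy \<open>z = 0\<close> emb_nz[OF emb, of x] unfolding z_def by simp
    next
      case False
      hence "h y \<noteq> 0" using emb_nz[OF emb] by blast
      moreover have "\<xi> * h y = - h x" using \<open>z = 0\<close> unfolding z_def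
        by (metis neg_eq_iff_add_eq_0 add.commute)
      ultimately have "\<xi> = h (- x / y)" by (simp add: hom_distribs field_simps)
      then show False using xi by blast
    qed
  qed
  define G where "G = (if 1 < r then (h (\<alpha> 1) + \<xi> * h (\<beta> 1)) * h (a 1 * x + b 1 * y) else 0)"
  have key: "z * (h u + \<xi> * h v) = G * h (c 1 * u + d 1 * v)" for u v
  proof -
    have "z * (h u + \<xi> * h v) =
     h (\<Sum>l<r. \<alpha> l * ((a l * x + b l * y) * (c l * u + d l * v))) + \<xi> * h (\<Sum>l<r. \<beta> l * ((a l * x + b l * y) * (c l * u + d l * v)))"
      unfolding z_def by (rule scal)
    also have "\<dots> = G * h (c 1 * u + d 1 * v)"
    proof -
      have s1: "(\<Sum>l<r. \<alpha> l * ((a l * x + b l * y) * (c l * u + d l * v))) = (if 1 < r then \<alpha> 1 * ((a 1 * x + b 1 * y) * (c 1 * u + d 1 * v)) else 0)"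
        by (rule sum_le2[OF r]) (simp add: xy0)
      have s2: "(\<Sum>l<r. \<beta> l * ((a l * x + b l * y) * (c l * u + d l * v))) = (if 1 < r then \<beta> 1 * ((a 1 * x + b 1 * y) * (c 1 * u + d 1 * v)) else 0)"
        by (rule sum_le2[OF r]) (simp add: xy0)
      show ?thesis unfolding s1 s2 G_def by (simp add: hom_distribs algebra_simps)
    qed
    finally show ?thesis .
  qed
  have k1: "z = G * h (c 1)" using key[of 1 0] by simp
  have k2: "z * \<xi> = G * h (d 1)" using key[of 0 1] by simp
  have hc: "h (c 1) \<noteq> 0" using k1 z0 by auto
  have "z * (\<xi> * h (c 1)) = z * h (d 1)"
  proof -
    have "z * (\<xi> * h (c 1)) = (z * \<xi>) * h (c 1)" by (simp add: mult.assoc)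
    also have "\<dots> = G * h (d 1) * h (c 1)" using k2 by simp
    also have "\<dots> = (G * h (c 1)) * h (d 1)" by (simp add: mult_ac)
    also have "\<dots> = z * h (d 1)" using k1 by simp
    finally show ?thesis .
  qed
  hence "\<xi> * h (c 1) = h (d 1)" using z0 mult_left_cancel by blast
  hence "\<xi> = h (d 1 / c 1)" using hc by (simp add: hom_distribs field_simps)
  then show False using xi by blast
qed

lemma not_range1:
  assumes emb: "is_field_emb h" and irr: "irreducible [:\<tau>, 0, 1:]" and eq: "\<xi>^2 + h \<tau> = 0"
  shows "\<xi> \<notin> range h"
proof
  assume "\<xi> \<in> range h"
  then obtain t where t: "\<xi> = h t" by blast
  interpret field_hom h by (rule emb_field_hom[OF emb])
  have "h (t^2 + \<tau>) = 0" using eq t by (simp add: hom_distribs)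
  hence "t^2 + \<tau> = 0" using emb_nz[OF emb] by blast
  hence "[:\<tau>, 0, 1:] = [:-t, 1:] * [:t, 1:]" by (simp add: power2_eq_square algebra_simps eq_neg_iff_add_eq_0)
  from irreducibleD[OF irr this] show False by (simp add: is_unit_iff_degree)
qed

lemma not_range2:
  assumes emb: "is_field_emb h" and irr: "irreducible [:\<tau>, 1, 1:]" and eq: "\<xi>^2 + \<xi> + h \<tau> = 0"
  shows "\<xi> \<notin> range h"
proof
  assume "\<xi> \<in> range h"
  then obtain t where t: "\<xi> = h t" by blast
  interpret field_hom h by (rule emb_field_hom[OF emb])
  have "h (t^2 + t + \<tau>) = 0" using eq t by (simp add: hom_distribs)
  hence "t^2 + t + \<tau> = 0" using emb_nz[OF emb] by blast
  hence "[:\<tau>, 1, 1:] = [:-t, 1:] * [:t + 1, 1:]" by (simp add: power2_eq_square algebra_simps eq_neg_iff_add_eq_0)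
  from irreducibleD[OF irr this] show False by (simp add: is_unit_iff_degree)
qed

lemma pt1:
  fixes \<xi> :: "'a::field"
  assumes x2: "\<xi> * \<xi> = - t"
  shows "(a + \<xi>*b)*c + (a+\<xi>*b)*(\<xi>*d) = (a-b)*c + (a-b)*(t*d) - t*(a*d) + b*c + (\<xi>*(a*d) + \<xi>*(b*c))"
proof -
  have "(a + \<xi>*b)*c + (a+\<xi>*b)*(\<xi>*d) = a*c + \<xi>*(a*d) + \<xi>*(b*c) + (\<xi>*\<xi>)*(b*d)" by (simp add: algebra_simps)
  also have "\<dots> = a*c + \<xi>*(a*d) + \<xi>*(b*c) - t*(b*d)" by (simp add: x2)
  finally show ?thesis by (simp add: algebra_simps)
qed

lemma case1:
  assumes emb: "is_field_emb h" and eq: "\<xi>^2 + h \<tau> = 0"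
    and carr: "A \<in> carrier_mat n n" "B \<in> carrier_mat n n" "C \<in> carrier_mat n n" "D \<in> carrier_mat n n"
  shows "lift_mat h \<xi> A B * lift_mat h \<xi> C D = lift_mat h \<xi> ((A - B) * (C + \<tau> \<cdot>\<^sub>m D) - \<tau> \<cdot>\<^sub>m (A * D) + B * C) (A * D + B * C)"
proof -
  interpret field_hom h by (rule emb_field_hom[OF emb])
  have x2: "\<xi> * \<xi> = - h \<tau>" using eq by (simp add: power2_eq_square eq_neg_iff_add_eq_0)
  show ?thesis
    apply (rule eq_matI)
    using carr apply (simp_all add: lift_mat_def scalar_prod_def hom_distribs)
    apply (simp only: sum_subtractf[symmetric] sum.distrib[symmetric])
    apply (rule sum.cong, simp)
    apply (rule pt1[OF x2])
    done
qed

lemma pt2: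
  fixes \<xi> :: "'a::field"
  assumes x2: "\<xi> * \<xi> = - \<xi> - t"
  shows "(a + \<xi>*b)*c + (a+\<xi>*b)*(\<xi>*d) = a*c + \<xi>*(a*d) + \<xi>*(b*c) - \<xi>*(b*d) - t*(b*d)"
proof -
  have "(a + \<xi>*b)*c + (a+\<xi>*b)*(\<xi>*d) = a*c + \<xi>*(a*d) + \<xi>*(b*c) + (\<xi>*\<xi>)*(b*d)" by (simp add: algebra_simps)
  also have "\<dots> = a*c + \<xi>*(a*d) + \<xi>*(b*c) - \<xi>*(b*d) - t*(b*d)" by (simp add: x2 algebra_simps)
  finally show ?thesis .
qed

lemma case2:
  assumes emb: "is_field_emb h" and eq: "\<xi>^2 + \<xi> + h \<tau> = 0"
    and carr: "A \<in> carrier_mat n n" "B \<in> carrier_mat n n" "C \<in> carrier_mat n n" "D \<in> carrier_mat n n"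
  shows "lift_mat h \<xi> A B * lift_mat h \<xi> C D = lift_mat h \<xi> (A * C - \<tau> \<cdot>\<^sub>m (B * D)) (A * C - (A - B) * (C - D))"
proof -
  interpret field_hom h by (rule emb_field_hom[OF emb])
  have x2: "\<xi> * \<xi> = - \<xi> - h \<tau>" using eq by (simp add: power2_eq_square eq_neg_iff_add_eq_0 algebra_simps)
  show ?thesis
    apply (rule eq_matI)
    using carr apply (simp_all add: lift_mat_def scalar_prod_def hom_distribs)
    apply (simp only: sum_subtractf[symmetric] sum.distrib[symmetric] sum_distrib_left)
    apply (rule sum.cong, simp)
    apply (subst pt2[OF x2])
    apply (simp add: algebra_simps)
    done
qed


theorem proposition3p1:
  fixes h :: "'k::field \<Rightarrow> 'F::field" and \<xi> :: 'F and \<tau> :: 'k and n :: nat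
    and A B C D :: "'k mat"
  assumes emb: "is_field_emb h"
    and gen: "\<forall>z. \<exists>x y. z = h x + \<xi> * h y"
    and n: "0 < n"
    and carr: "A \<in> carrier_mat n n" "B \<in> carrier_mat n n" "C \<in> carrier_mat n n" "D \<in> carrier_mat n n"
  shows
    "(irreducible [:\<tau>, 0, 1:] \<and> \<xi>^2 + h \<tau> = 0 \<longrightarrow>
       (let M1 = (A - B) * (C + \<tau> \<cdot>\<^sub>m D); M2 = A * D; M3 = B * C;
            N1 = M1 - \<tau> \<cdot>\<^sub>m M2 + M3; N2 = M2 + M3
        in lift_mat h \<xi> A B * lift_mat h \<xi> C D = lift_mat h \<xi> N1 N2)
       \<and> (\<forall>r a b c d \<alpha> \<beta>. alg_computes_product h \<xi> n r a b c d \<alpha> \<beta> \<longrightarrow> 3 \<le> r))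
     \<and>
     (irreducible [:\<tau>, 1, 1:] \<and> \<xi>^2 + \<xi> + h \<tau> = 0 \<longrightarrow>
       (let M1 = A * C; M2 = B * D; M3 = (A - B) * (C - D);
            N1 = M1 - \<tau> \<cdot>\<^sub>m M2; N2 = M1 - M3
        in lift_mat h \<xi> A B * lift_mat h \<xi> C D = lift_mat h \<xi> N1 N2)
       \<and> (\<forall>r a b c d \<alpha> \<beta>. alg_computes_product h \<xi> n r a b c d \<alpha> \<beta> \<longrightarrow> 3 \<le> r))"
proof -
  show ?thesis
  proof (intro conjI impI allI)
    assume h: "irreducible [:\<tau>, 0, 1:] \<and> \<xi>^2 + h \<tau> = 0"
    show "let M1 = (A - B) * (C + \<tau> \<cdot>\<^sub>m D); M2 = A * D; M3 = B * C;
            N1 = M1 - \<tau> \<cdot>\<^sub>m M2 + M3; N2 = M2 + M3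
        in lift_mat h \<xi> A B * lift_mat h \<xi> C D = lift_mat h \<xi> N1 N2"
      unfolding Let_def using case1[OF emb _ carr] h by blast
    fix r a b c d \<alpha> \<beta>
    assume "alg_computes_product h \<xi> n r a b c d \<alpha> \<beta>"
    then show "3 \<le> r" using lower_bound[OF emb not_range1[OF emb] n] h by blast
  next
    assume h: "irreducible [:\<tau>, 1, 1:] \<and> \<xi>^2 + \<xi> + h \<tau> = 0"
    show "let M1 = A * C; M2 = B * D; M3 = (A - B) * (C - D);
            N1 = M1 - \<tau> \<cdot>\<^sub>m M2; N2 = M1 - M3
        in lift_mat h \<xi> A B * lift_mat h \<xi> C D = lift_mat h \<xi> N1 N2"
      unfolding Let_def using case2[OF emb _ carr] h by blast
    fix r a b c d \<alpha> \<beta>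
    assume "alg_computes_product h \<xi> n r a b c d \<alpha> \<beta>"
    then show "3 \<le> r" using lower_bound[OF emb not_range2[OF emb] n] h by blast
  qed
qed

end
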